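(* Let $\kappa$ be an uncountable regular cardinal, $U$ an unbounded subset of $\kappa$, and $T$ a subtree of ${}^{<\kappa}\kappa$. If $\mu$ is a cardinal with $\mu^{<\kappa}<|[T]|$ and $c:{}^\kappa\mu\to[T]$ is a continuous surjection, then there are a strictly increasing sequence $\langle\lambda_n\in U : n<\omega\rangle$ with least upper bound $\lambda$ and an injection $i:\prod_{n<\omega}\lambda_n\to T(\lambda)$ such that for all $x,y\in\prod_{n<\omega}\lambda_n$ and all $n<\omega$: $x\restriction n=y\restriction n$ if and only if $i(x)\restriction\lambda_n=i(y)\restriction\lambda_n$.
   Context: ${}^{<\kappa}\kappa$ is the set of functions from ordinals $\alpha<\kappa$ to $\kappa$, ordered by inclusion; a subtree is a subset closed under restrictions to smaller ordinals. $[T]$ is the set of $x\in{}^\kappa\kappa$ with $x\restriction\alpha\in T$ for all $\alpha<\kappa$, with the subspace topology of ${}^\kappa\kappa$. $T(\lambda)$ denotes the set of nodes of $T$ of length $\lambda$. For a cardinal $\nu$, ${}^\kappa\nu$ carries the topology with basic open sets $N_s=\{x\in{}^\kappa\nu : s\subseteq x\}$ for $s$ a function from an ordinal below $\kappa$ to $\nu$. *)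

theory Defs
  imports "HOL-Analysis.Analysis" "HOL-Library.Countable_Set"
begin

text \<open>The cardinal kappa is modelled as a well-ordered type 'k whose order type
is kappa: the elements of 'k are the ordinals below kappa.  A function from an
ordinal alpha < kappa to a set X is a partial map with domain exactly the
initial segment below alpha.\<close>

definition seqs_below :: "('k::wellorder \<rightharpoonup> 'b) set" where
  "seqs_below = {s. \<exists>\<alpha>. dom s = {..<\<alpha>}}"

definition restr_p :: "('k::wellorder \<rightharpoonup> 'b) \<Rightarrow> 'k \<Rightarrow> ('k \<rightharpoonup> 'b)" where
  "restr_p s \<alpha> = (\<lambda>\<beta>. if \<beta> < \<alpha> then s \<beta> else None)"

definition restr :: "('k::wellorder \<Rightarrow> 'b) \<Rightarrow> 'k \<Rightarrow> ('k \<rightharpoonup> 'b)" where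
  "restr x \<alpha> = (\<lambda>\<beta>. if \<beta> < \<alpha> then Some (x \<beta>) else None)"

definition is_subtree :: "('k::wellorder \<rightharpoonup> 'b) set \<Rightarrow> bool" where
  "is_subtree T \<longleftrightarrow> T \<subseteq> seqs_below \<and> (\<forall>s\<in>T. \<forall>\<alpha>. restr_p s \<alpha> \<in> T)"

definition body :: "('k::wellorder \<rightharpoonup> 'b) set \<Rightarrow> ('k \<Rightarrow> 'b) set" where
  "body T = {x. \<forall>\<alpha>. restr x \<alpha> \<in> T}"

definition level :: "('k::wellorder \<rightharpoonup> 'b) set \<Rightarrow> 'k \<Rightarrow> ('k \<rightharpoonup> 'b) set" where
  "level T lam = {s\<in>T. dom s = {..<lam}}"

definition basic_nbhd :: "('k::wellorder \<rightharpoonup> 'b) \<Rightarrow> ('k \<Rightarrow> 'b) set" where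
  "basic_nbhd s = {x. \<forall>\<beta>\<in>dom s. s \<beta> = Some (x \<beta>)}"

definition kappa_top :: "('k::wellorder \<Rightarrow> 'b) topology" where
  "kappa_top = topology (arbitrary union_of (\<lambda>U. \<exists>s\<in>seqs_below. U = basic_nbhd s))"

definition unbounded :: "'k::wellorder set \<Rightarrow> bool" where
  "unbounded U \<longleftrightarrow> (\<forall>\<alpha>. \<exists>\<beta>\<in>U. \<alpha> \<le> \<beta>)"

definition is_cardinal_type :: "'k::wellorder itself \<Rightarrow> bool" where
  "is_cardinal_type _ \<longleftrightarrow>
     (\<forall>\<alpha>::'k. (card_of {..<\<alpha>}, card_of (UNIV::'k set)) \<in> ordLess)"

definition regular_uncountable_type :: "'k::wellorder itself \<Rightarrow> bool" where
  "regular_uncountable_type t \<longleftrightarrow> is_cardinal_type t \<and> uncountable (UNIV::'k set) \<and>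
     (\<forall>A::'k set. unbounded A \<longrightarrow> (card_of A, card_of (UNIV::'k set)) \<in> ordIso)"

end

theory Submission
  imports Defs
begin
unbundle cardinal_syntax


lemma restr_in_seqs: "restr x \<alpha> \<in> seqs_below"
  unfolding seqs_below_def restr_def by (auto simp: dom_def intro!: exI[of _ \<alpha>])

lemma mem_nbhd_restr: "y \<in> basic_nbhd (restr x \<alpha>) \<longleftrightarrow> (\<forall>\<beta><\<alpha>. y \<beta> = x \<beta>)"
  unfolding basic_nbhd_def restr_def by (auto simp: dom_def)

lemma seqs_restr:
  assumes "dom s = {..<\<alpha>}" "y \<in> basic_nbhd s"
  shows "s = restr y \<alpha>"
proof
  fix \<beta> show "s \<beta> = restr y \<alpha> \<beta>"
    using assms unfolding basic_nbhd_def restr_def by (cases "\<beta> < \<alpha>") auto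
qed

lemma nbhd_Int:
  fixes s t :: "'k::wellorder \<rightharpoonup> 'b"
  assumes "s \<in> seqs_below" "t \<in> seqs_below"
  shows "basic_nbhd s \<inter> basic_nbhd t = {} \<or> basic_nbhd s \<inter> basic_nbhd t = basic_nbhd s
        \<or> basic_nbhd s \<inter> basic_nbhd t = basic_nbhd t"
proof (cases "basic_nbhd s \<inter> basic_nbhd t = {}")
  case False
  then obtain y where y: "y \<in> basic_nbhd s" "y \<in> basic_nbhd t" by auto
  obtain \<alpha> \<beta> where a: "dom s = {..<\<alpha>}" and b: "dom t = {..<\<beta>}"
    using assms unfolding seqs_below_def by auto
  have s: "s = restr y \<alpha>" and t: "t = restr y \<beta>" using seqs_restr a b y by auto
  show ?thesis
  proof (cases "\<alpha> \<le> \<beta>")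
    case True
    then have "basic_nbhd t \<subseteq> basic_nbhd s" unfolding s t by (auto simp: mem_nbhd_restr)
    then show ?thesis by blast
  next
    case False
    then have "basic_nbhd s \<subseteq> basic_nbhd t" unfolding s t by (auto simp: mem_nbhd_restr)
    then show ?thesis by blast
  qed
qed simp

lemma istop_kappa:
  "istopology (arbitrary union_of (\<lambda>U. \<exists>s\<in>(seqs_below :: ('k::wellorder \<rightharpoonup> 'b) set). U = basic_nbhd s))"
  unfolding istopology_base_eq
proof (intro allI impI)
  fix S T :: "('k \<Rightarrow> 'b) set"
  assume "(\<exists>s\<in>seqs_below. S = basic_nbhd s) \<and> (\<exists>s\<in>seqs_below. T = basic_nbhd s)"
  then obtain s t where st: "s \<in> seqs_below" "t \<in> seqs_below" "S = basic_nbhd s" "T = basic_nbhd t" by auto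
  have e: "(arbitrary union_of (\<lambda>U. \<exists>s\<in>(seqs_below :: ('k::wellorder \<rightharpoonup> 'b) set). U = basic_nbhd s)) {}"
    by (simp add: arbitrary_union_of_empty)
  have i: "\<And>r. r \<in> seqs_below \<Longrightarrow> (arbitrary union_of (\<lambda>U. \<exists>s\<in>(seqs_below :: ('k::wellorder \<rightharpoonup> 'b) set). U = basic_nbhd s)) (basic_nbhd r)"
    by (rule arbitrary_union_of_inc) auto
  from nbhd_Int[OF st(1,2)] show "(arbitrary union_of (\<lambda>U. \<exists>s\<in>seqs_below. U = basic_nbhd s)) (S \<inter> T)"
    using e i st by auto
qed

lemma openin_kappa:
  "openin (kappa_top :: ('k::wellorder \<Rightarrow> 'b) topology) = arbitrary union_of (\<lambda>U. \<exists>s\<in>seqs_below. U = basic_nbhd s)"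
  unfolding kappa_top_def by (rule topology_inverse'[OF istop_kappa])

lemma empty_seqs: "(Map.empty :: 'k::wellorder \<rightharpoonup> 'b) \<in> seqs_below"
proof -
  have "dom (Map.empty :: 'k::wellorder \<rightharpoonup> 'b) = {..<(LEAST z. True)}"
    using not_less_Least[of _ "\<lambda>_. True"] by auto
  then show ?thesis unfolding seqs_below_def by blast
qed

lemma nbhd_empty: "basic_nbhd Map.empty = UNIV"
  unfolding basic_nbhd_def by auto

lemma topspace_kappa: "topspace (kappa_top :: ('k::wellorder \<Rightarrow> 'b) topology) = UNIV"
proof -
  have "openin (kappa_top :: ('k::wellorder \<Rightarrow> 'b) topology) UNIV"
    unfolding openin_kappa nbhd_empty[symmetric]
    by (rule arbitrary_union_of_inc) (use empty_seqs in auto)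
  then show ?thesis using openin_subset by blast
qed

lemma openin_nbhd: "s \<in> seqs_below \<Longrightarrow> openin (kappa_top :: ('k::wellorder \<Rightarrow> 'b) topology) (basic_nbhd s)"
  unfolding openin_kappa by (rule arbitrary_union_of_inc) auto

lemma open_point:
  assumes "openin (kappa_top :: ('k::wellorder \<Rightarrow> 'b) topology) W" "y \<in> W"
  shows "\<exists>r\<in>seqs_below. y \<in> basic_nbhd r \<and> basic_nbhd r \<subseteq> W"
  using assms unfolding openin_kappa union_of_def arbitrary_def by blast

lemma cont_refine:
  fixes c :: "('k::wellorder \<Rightarrow> 'm) \<Rightarrow> ('k \<Rightarrow> 'b)"
  assumes cont: "continuous_map (kappa_top :: ('k \<Rightarrow> 'm) topology) (subtopology kappa_top B) c"
    and s: "s \<in> seqs_below" and y: "y \<in> basic_nbhd s"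
  shows "\<exists>r\<in>seqs_below. s \<subseteq>\<^sub>m r \<and> y \<in> basic_nbhd r \<and> (\<forall>y'\<in>basic_nbhd r. restr (c y') \<beta> = restr (c y) \<beta>)"
proof -
  have "openin (subtopology kappa_top B) (B \<inter> basic_nbhd (restr (c y) \<beta>))"
    by (rule openin_subtopology_Int2) (rule openin_nbhd[OF restr_in_seqs])
  from openin_continuous_map_preimage[OF cont this]
  have o: "openin kappa_top {x. c x \<in> B \<inter> basic_nbhd (restr (c y) \<beta>)}"
    by (simp add: topspace_kappa)
  have "c y \<in> B" using cont unfolding continuous_map_def by (auto simp: topspace_kappa)
  then have "y \<in> {x. c x \<in> B \<inter> basic_nbhd (restr (c y) \<beta>)}" by (simp add: mem_nbhd_restr)
  from open_point[OF o this] obtain r0 where r0: "r0 \<in> seqs_below" "y \<in> basic_nbhd r0"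
     "basic_nbhd r0 \<subseteq> {x. c x \<in> B \<inter> basic_nbhd (restr (c y) \<beta>)}" by blast
  obtain \<alpha>1 \<alpha>2 where a: "dom s = {..<\<alpha>1}" "dom r0 = {..<\<alpha>2}"
    using s r0(1) unfolding seqs_below_def by auto
  have s': "s = restr y \<alpha>1" "r0 = restr y \<alpha>2" using seqs_restr a y r0(2) by auto
  define r where "r = restr y (max \<alpha>1 \<alpha>2)"
  have "basic_nbhd r \<subseteq> basic_nbhd r0" unfolding r_def s'(2) by (auto simp: mem_nbhd_restr less_max_iff_disj)
  note sub = this
  have sm: "s \<subseteq>\<^sub>m r" unfolding s'(1) r_def map_le_def restr_def by (auto simp: dom_def less_max_iff_disj)
  have yr: "y \<in> basic_nbhd r" unfolding r_def mem_nbhd_restr by auto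
  have "\<forall>y'\<in>basic_nbhd r. restr (c y') \<beta> = restr (c y) \<beta>"
  proof
    fix y' assume "y' \<in> basic_nbhd r"
    then have "c y' \<in> basic_nbhd (restr (c y) \<beta>)" using r0(3) sub by blast
    then show "restr (c y') \<beta> = restr (c y) \<beta>" unfolding mem_nbhd_restr
      by (auto simp: restr_def fun_eq_iff)
  qed
  then show ?thesis using sm yr restr_in_seqs unfolding r_def by blast
qed



lemma times_less:
  assumes INF: "infinite C" and L1: "|A| <o |C|" and L2: "|B| <o |C|"
  shows "|A \<times> B| <o |C|"
proof (cases "A = {} \<or> B = {}")
  case True
  then have "A \<times> B = {}" by blast
  then have "|A \<times> B| \<le>o |A|" by (subst \<open>A \<times> B = {}\<close>) (rule card_of_empty)
  then show ?thesis by (rule ordLeq_ordLess_trans[OF _ L1])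
next
  case False
  show ?thesis
  proof (rule ccontr)
    assume "\<not> |A \<times> B| <o |C|"
    then have *: "|C| \<le>o |A \<times> B|"
      using not_ordLess_iff_ordLeq[OF card_of_Well_order card_of_Well_order, of "A \<times> B" C] by simp
    have "infinite (A \<times> B)"
    proof
      assume "finite (A \<times> B)"
      then have "finite C" by (rule card_of_ordLeq_finite[OF *])
      then show False using INF by simp
    qed
    hence 1: "infinite A \<or> infinite B" by auto
    have "|A| \<le>o |B| \<or> |B| \<le>o |A|" by (rule ordLeq_total[OF card_of_Well_order card_of_Well_order])
    then show False
    proof
      assume c: "|A| \<le>o |B|"
      have "infinite B"
      proof
        assume "finite B" then have "finite A" by (rule card_of_ordLeq_finite[OF c])
        then show False using 1 \<open>finite B\<close> by simp
      qed
      hence "|A \<times> B| =o |B|" using card_of_Times_infinite[of B A] False c by simp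
      then have "|C| \<le>o |B|" using * ordLeq_ordIso_trans by blast
      thus False using L2 not_ordLess_ordLeq by blast
    next
      assume c: "|B| \<le>o |A|"
      have "infinite A"
      proof
        assume "finite A" then have "finite B" by (rule card_of_ordLeq_finite[OF c])
        then show False using 1 \<open>finite A\<close> by simp
      qed
      hence "|A \<times> B| =o |A|" using card_of_Times_infinite[of A B] False c by simp
      then have "|C| \<le>o |A|" using * ordLeq_ordIso_trans by blast
      thus False using L1 not_ordLess_ordLeq by blast
    qed
  qed
qed

lemma un_leq:
  assumes "infinite C" "|A| \<le>o |C|" "|B| \<le>o |C|"
  shows "|A \<union> B| \<le>o |C|"
  using card_of_Un_ordLeq_infinite_Field[of "|C|" A B] assms
  by (simp add: Field_card_of card_of_Card_order card_of_card_order_on)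

lemma restr_inj: "restr x \<alpha> = restr x \<beta> \<Longrightarrow> \<alpha> = (\<beta>::'k::wellorder)"
proof (rule ccontr)
  assume e: "restr x \<alpha> = restr x \<beta>" and n: "\<alpha> \<noteq> \<beta>"
  then consider "\<alpha> < \<beta>" | "\<beta> < \<alpha>" using neqE by blast
  then show False
  proof cases
    case 1 then have "restr x \<alpha> \<alpha> \<noteq> restr x \<beta> \<alpha>" by (simp add: restr_def)
    then show False using e by simp
  next
    case 2 then have "restr x \<alpha> \<beta> \<noteq> restr x \<beta> \<beta>" by (simp add: restr_def)
    then show False using e by simp
  qed
qed

lemma univ_le_seqs: "|UNIV::'k::wellorder set| \<le>o |seqs_below::('k \<rightharpoonup> 'm) set|"
proof -
  have "inj_on (restr (\<lambda>_::'k. undefined::'m)) UNIV" by (auto intro: inj_onI restr_inj)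
  moreover have "range (restr (\<lambda>_::'k. undefined::'m)) \<subseteq> seqs_below" using restr_in_seqs by blast
  ultimately show ?thesis using card_of_ordLeq[of "UNIV::'k set" "seqs_below::('k \<rightharpoonup> 'm) set"] by blast
qed

context
  fixes kt :: "'k::wellorder itself"
  assumes kappa: "regular_uncountable_type TYPE('k)"
begin

lemma k_infinite: "infinite (UNIV::'k set)"
  proof
  assume "finite (UNIV::'k set)"
  then have "countable (UNIV::'k set)" by (rule countable_finite)
  then show False using kappa unfolding regular_uncountable_type_def by blast
qed

lemma k_less: "|{..<(l::'k)}| <o |UNIV::'k set|"
  using kappa unfolding regular_uncountable_type_def is_cardinal_type_def by blast

lemma k_bounded:
  assumes "|A::'k set| <o |UNIV::'k set|"
  shows "\<exists>\<alpha>. \<forall>d\<in>A. d < \<alpha>"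
proof (rule ccontr)
  assume "\<not> ?thesis"
  then have "unbounded A" unfolding unbounded_def by (meson not_le)
  then have "|A| =o |UNIV::'k set|" using kappa unfolding regular_uncountable_type_def by blast
  then show False using assms not_ordLess_ordIso by blast
qed

lemma k_countable_bounded:
  assumes "countable (A::'k set)"
  shows "\<exists>\<alpha>. \<forall>d\<in>A. d < \<alpha>"
proof (rule ccontr)
  assume "\<not> ?thesis"
  then have "unbounded A" unfolding unbounded_def by (meson not_le)
  then have "|A| =o |UNIV::'k set|" using kappa unfolding regular_uncountable_type_def by blast
  then have "|UNIV::'k set| \<le>o |A|" using ordIso_iff_ordLeq by blast
  moreover have "|A| \<le>o |UNIV::nat set|" using assms unfolding countable_def
    using card_of_ordLeq[of A "UNIV::nat set"] by blast
  ultimately have "|UNIV::'k set| \<le>o |UNIV::nat set|" by (rule ordLeq_transitive)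
  then have "countable (UNIV::'k set)" unfolding countable_def
    using card_of_ordLeq[of "UNIV::'k set" "UNIV::nat set"] by blast
  then show False using kappa unfolding regular_uncountable_type_def by blast
qed

end



definition big :: "(('k::wellorder \<Rightarrow> 'm) \<Rightarrow> ('k \<Rightarrow> 'b)) \<Rightarrow> ('k \<rightharpoonup> 'm) \<Rightarrow> bool" where
  "big c s \<longleftrightarrow> |seqs_below :: ('k \<rightharpoonup> 'm) set| <o |c ` basic_nbhd s|"

definition good :: "(('k::wellorder \<Rightarrow> 'm) \<Rightarrow> ('k \<Rightarrow> 'b)) \<Rightarrow> ('k \<rightharpoonup> 'm) \<Rightarrow> ('k \<Rightarrow> 'b) set" where
  "good c s = {z \<in> c ` basic_nbhd s. \<forall>r\<in>seqs_below. z \<in> c ` basic_nbhd r \<longrightarrow> big c r}"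

definition agree :: "(('k::wellorder \<Rightarrow> 'm) \<Rightarrow> ('k \<Rightarrow> 'b)) \<Rightarrow> ('k \<rightharpoonup> 'm) \<Rightarrow> 'k \<Rightarrow> bool" where
  "agree c s l \<longleftrightarrow> (\<forall>y\<in>basic_nbhd s. \<forall>y'\<in>basic_nbhd s. restr (c y) l = restr (c y') l)"

definition disagree :: "(('k::wellorder \<Rightarrow> 'm) \<Rightarrow> ('k \<Rightarrow> 'b)) \<Rightarrow> ('k \<rightharpoonup> 'm) \<Rightarrow> ('k \<rightharpoonup> 'm) \<Rightarrow> 'k \<Rightarrow> bool" where
  "disagree c s t l \<longleftrightarrow> (\<forall>y\<in>basic_nbhd s. \<forall>y'\<in>basic_nbhd t. restr (c y) l \<noteq> restr (c y') l)"

lemma good_big: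
  fixes c :: "('k::wellorder \<Rightarrow> 'm) \<Rightarrow> ('k \<Rightarrow> 'b)"
  assumes inf: "infinite (UNIV::'k set)" and b: "big c s"
  shows "|seqs_below :: ('k \<rightharpoonup> 'm) set| <o |good c s|"
proof -
  let ?Q = "seqs_below :: ('k \<rightharpoonup> 'm) set"
  have infQ: "infinite ?Q"
  proof
    assume "finite ?Q"
    then have "finite (UNIV::'k set)" by (rule card_of_ordLeq_finite[OF univ_le_seqs])
    then show False using inf by simp
  qed
  define Bad where "Bad = (\<Union>r\<in>{r\<in>?Q. \<not> big c r}. c ` basic_nbhd r)"
  have "|Bad| \<le>o |?Q|" unfolding Bad_def
  proof (rule card_of_UNION_ordLeq_infinite[OF infQ])
    show "|{r \<in> ?Q. \<not> big c r}| \<le>o |?Q|" by (rule card_of_mono1) auto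
    show "\<forall>i\<in>{r \<in> ?Q. \<not> big c r}. |c ` basic_nbhd i| \<le>o |?Q|"
    proof
      fix i assume "i \<in> {r \<in> ?Q. \<not> big c r}"
      then have "\<not> |?Q| <o |c ` basic_nbhd i|" unfolding big_def by auto
      then show "|c ` basic_nbhd i| \<le>o |?Q|"
        using not_ordLess_iff_ordLeq[OF card_of_Well_order card_of_Well_order] by blast
    qed
  qed
  have sub: "c ` basic_nbhd s \<subseteq> good c s \<union> Bad" unfolding good_def Bad_def by auto
  show ?thesis
  proof (rule ccontr)
    assume "\<not> ?thesis"
    then have "|good c s| \<le>o |?Q|"
      using not_ordLess_iff_ordLeq[OF card_of_Well_order card_of_Well_order] by blast
    then have "|good c s \<union> Bad| \<le>o |?Q|" using un_leq[OF infQ] \<open>|Bad| \<le>o |?Q|\<close> by blast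
    then have "|c ` basic_nbhd s| \<le>o |?Q|" using card_of_mono1[OF sub] ordLeq_transitive by blast
    then show False using b unfolding big_def using not_ordLess_ordLeq by blast
  qed
qed

lemma good_refine:
  fixes c :: "('k::wellorder \<Rightarrow> 'm) \<Rightarrow> ('k \<Rightarrow> 'b)"
  assumes cont: "continuous_map (kappa_top :: ('k \<Rightarrow> 'm) topology) (subtopology kappa_top B) c"
    and s: "s \<in> seqs_below" and z: "z \<in> good c s"
  shows "\<exists>r\<in>seqs_below. s \<subseteq>\<^sub>m r \<and> big c r \<and> agree c r \<beta> \<and> (\<forall>y'\<in>basic_nbhd r. restr (c y') \<beta> = restr z \<beta>)"
proof -
  obtain y where y: "y \<in> basic_nbhd s" "z = c y" using z unfolding good_def by auto
  from cont_refine[OF cont s y(1), of \<beta>] obtain r where r: "r \<in> seqs_below" "s \<subseteq>\<^sub>m r"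
    "y \<in> basic_nbhd r" "\<forall>y'\<in>basic_nbhd r. restr (c y') \<beta> = restr (c y) \<beta>" by blast
  have "big c r" using z r(1,3) y(2) unfolding good_def by blast
  moreover have "agree c r \<beta>" using r(4) unfolding agree_def by simp
  ultimately show ?thesis using r y(2) by blast
qed



lemma step:
  fixes c :: "('k::wellorder \<Rightarrow> 'm) \<Rightarrow> ('k \<Rightarrow> 'b)"
    and S :: "'i \<Rightarrow> ('k \<rightharpoonup> 'm)"
  assumes kappa: "regular_uncountable_type TYPE('k)"
    and U: "unbounded U"
    and cont: "continuous_map (kappa_top :: ('k \<Rightarrow> 'm) topology) (subtopology kappa_top B) c"
    and I: "|I| <o |UNIV::'k set|"
    and S: "\<forall>\<sigma>\<in>I. S \<sigma> \<in> seqs_below \<and> big c (S \<sigma>)"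
  shows "\<exists>l' S'. l' \<in> U \<and> l < l' \<and>
     (\<forall>\<sigma>\<in>I. \<forall>a<l. S' (\<sigma>, a) \<in> seqs_below \<and> big c (S' (\<sigma>, a)) \<and> S \<sigma> \<subseteq>\<^sub>m S' (\<sigma>, a) \<and> agree c (S' (\<sigma>, a)) l') \<and>
     (\<forall>\<sigma>\<in>I. \<forall>a<l. \<forall>b<l. a \<noteq> b \<longrightarrow> disagree c (S' (\<sigma>, a)) (S' (\<sigma>, b)) l')"
proof -
  let ?Q = "seqs_below :: ('k \<rightharpoonup> 'm) set"
  have inf: "infinite (UNIV::'k set)" by (rule k_infinite[OF kappa])
  have "\<forall>\<sigma>\<in>I. \<exists>f. inj_on f {..<l} \<and> f ` {..<l} \<subseteq> good c (S \<sigma>)"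
  proof
    fix \<sigma> assume "\<sigma> \<in> I"
    then have "|?Q| <o |good c (S \<sigma>)|" using good_big[OF inf] S by blast
    then have "|{..<l}| <o |good c (S \<sigma>)|"
      using k_less[OF kappa, of l] univ_le_seqs ordLess_ordLeq_trans ordLess_transitive by blast
    then have "|{..<l}| \<le>o |good c (S \<sigma>)|" by (rule ordLess_imp_ordLeq)
    then show "\<exists>f. inj_on f {..<l} \<and> f ` {..<l} \<subseteq> good c (S \<sigma>)" using card_of_ordLeq by blast
  qed
  then obtain F where F: "\<forall>\<sigma>\<in>I. inj_on (F \<sigma>) {..<l} \<and> F \<sigma> ` {..<l} \<subseteq> good c (S \<sigma>)"
    by metis
  define dl where "dl = (\<lambda>(\<sigma>, a, b). SOME \<delta>. F \<sigma> a \<delta> \<noteq> F \<sigma> b \<delta>)"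
  have dl: "F \<sigma> a (dl (\<sigma>, a, b)) \<noteq> F \<sigma> b (dl (\<sigma>, a, b))" if "\<sigma> \<in> I" "a < l" "b < l" "a \<noteq> b" for \<sigma> a b
  proof -
    have "F \<sigma> a \<noteq> F \<sigma> b" using F that unfolding inj_on_def by auto
    then obtain \<delta> where "F \<sigma> a \<delta> \<noteq> F \<sigma> b \<delta>" by auto
    then show ?thesis unfolding dl_def by simp (rule someI)
  qed
  have "|I \<times> ({..<l} \<times> {..<l})| <o |UNIV::'k set|"
    using times_less[OF inf I times_less[OF inf k_less[OF kappa] k_less[OF kappa]]] .
  then have "|dl ` (I \<times> ({..<l} \<times> {..<l}))| <o |UNIV::'k set|"
    using card_of_image ordLeq_ordLess_trans by blast
  from k_bounded[OF kappa this] obtain \<alpha>1 where a1: "\<forall>d\<in>dl ` (I \<times> ({..<l} \<times> {..<l})). d < \<alpha>1" by blast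
  have "|{l}| <o |UNIV::'k set|"
    by (rule finite_ordLess_infinite[OF card_of_Well_order card_of_Well_order]) (simp_all add: Field_card_of inf)
  from k_bounded[OF kappa this] obtain \<alpha>2 where a2: "l < \<alpha>2" by blast
  obtain l' where l': "l' \<in> U" "max \<alpha>1 \<alpha>2 \<le> l'" using U unfolding unbounded_def by blast
  have a12: "\<alpha>1 \<le> l'" "\<alpha>2 \<le> l'" using l'(2) by simp_all
  have ll': "l < l'" using a2 a12(2) by (rule less_le_trans)
  have dl': "dl (\<sigma>, a, b) < l'" if "\<sigma> \<in> I" "a < l" "b < l" for \<sigma> a b
  proof -
    have "dl (\<sigma>, a, b) \<in> dl ` (I \<times> ({..<l} \<times> {..<l}))" using that by auto
    then have "dl (\<sigma>, a, b) < \<alpha>1" using a1 by blast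
    then show ?thesis using a12(1) by (rule less_le_trans)
  qed
  have "\<forall>p\<in>I \<times> {..<l}. \<exists>r. r \<in> seqs_below \<and> S (fst p) \<subseteq>\<^sub>m r \<and> big c r \<and> agree c r l' \<and>
          (\<forall>y'\<in>basic_nbhd r. restr (c y') l' = restr (F (fst p) (snd p)) l')"
  proof
    fix p assume p: "p \<in> I \<times> {..<l}"
    then have "fst p \<in> I" "snd p \<in> {..<l}" by auto
    then have "F (fst p) (snd p) \<in> good c (S (fst p))" using F by blast
    from good_refine[OF cont _ this, of l'] S p
    show "\<exists>r. r \<in> seqs_below \<and> S (fst p) \<subseteq>\<^sub>m r \<and> big c r \<and> agree c r l' \<and>
          (\<forall>y'\<in>basic_nbhd r. restr (c y') l' = restr (F (fst p) (snd p)) l')" by auto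
  qed
  then obtain S' where S': "\<forall>p\<in>I \<times> {..<l}. S' p \<in> seqs_below \<and> S (fst p) \<subseteq>\<^sub>m S' p \<and> big c (S' p) \<and> agree c (S' p) l' \<and>
          (\<forall>y'\<in>basic_nbhd (S' p). restr (c y') l' = restr (F (fst p) (snd p)) l')"
    by metis
  have dis: "disagree c (S' (\<sigma>, a)) (S' (\<sigma>, b)) l'" if "\<sigma> \<in> I" "a < l" "b < l" "a \<noteq> b" for \<sigma> a b
    unfolding disagree_def
  proof (intro ballI)
    fix y y' assume y: "y \<in> basic_nbhd (S' (\<sigma>, a))" and y': "y' \<in> basic_nbhd (S' (\<sigma>, b))"
    have e1: "restr (c y) l' = restr (F \<sigma> a) l'" using S' y that by auto
    have e2: "restr (c y') l' = restr (F \<sigma> b) l'" using S' y' that by auto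
    have "restr (F \<sigma> a) l' (dl (\<sigma>, a, b)) \<noteq> restr (F \<sigma> b) l' (dl (\<sigma>, a, b))"
      using dl[OF that] dl'[OF that(1-3)] by (simp add: restr_def)
    then show "restr (c y) l' \<noteq> restr (c y') l'" using e1 e2 by metis
  qed
  show ?thesis
    apply (rule exI[of _ l'], rule exI[of _ S'])
    using l'(1) ll' S' dis by auto
qed



definition Sig :: "(nat \<Rightarrow> 'k::wellorder) \<Rightarrow> nat \<Rightarrow> 'k list set" where
  "Sig L k = {\<sigma>. length \<sigma> = k \<and> (\<forall>m<k. \<sigma> ! m < L m)}"

lemma Sig_cong: "(\<And>m. m < k \<Longrightarrow> L m = L' m) \<Longrightarrow> Sig L k = Sig L' k"
  unfolding Sig_def by auto

lemma Sig_Suc_decomp: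
  assumes "\<sigma> \<in> Sig L (Suc k)"
  shows "\<sigma> = butlast \<sigma> @ [last \<sigma>] \<and> butlast \<sigma> \<in> Sig L k \<and> last \<sigma> < L k"
proof -
  have len: "length \<sigma> = Suc k" and lt: "\<forall>m<Suc k. \<sigma> ! m < L m" using assms unfolding Sig_def by auto
  then have ne: "\<sigma> \<noteq> []" by auto
  have "butlast \<sigma> \<in> Sig L k" unfolding Sig_def using len lt by (auto simp: nth_butlast)
  moreover have "last \<sigma> < L k" using lt len ne by (simp add: last_conv_nth)
  ultimately show ?thesis using ne by simp
qed

lemma Sig_snoc: "\<sigma> \<in> Sig L k \<Longrightarrow> a < L k \<Longrightarrow> \<sigma> @ [a] \<in> Sig L (Suc k)"
  unfolding Sig_def by (auto simp: nth_append less_Suc_eq)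

lemma Sig_card:
  assumes kappa: "regular_uncountable_type TYPE('k::wellorder)"
  shows "|Sig (L :: nat \<Rightarrow> 'k) k| <o |UNIV::'k set|"
proof (induction k)
  case 0
  have "Sig L 0 = {[]}" unfolding Sig_def by auto
  then have fin: "finite (Sig L 0)" by simp
  show ?case
    by (rule finite_ordLess_infinite[OF card_of_Well_order card_of_Well_order])
       (simp_all only: Field_card_of k_infinite[OF kappa] fin not_False_eq_True)
next
  case (Suc k)
  have "Sig L (Suc k) \<subseteq> (\<lambda>(\<sigma>, a). \<sigma> @ [a]) ` (Sig L k \<times> {..<L k})"
  proof
    fix \<sigma> assume "\<sigma> \<in> Sig L (Suc k)"
    from Sig_Suc_decomp[OF this] show "\<sigma> \<in> (\<lambda>(\<sigma>, a). \<sigma> @ [a]) ` (Sig L k \<times> {..<L k})"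
      by (intro image_eqI[of _ _ "(butlast \<sigma>, last \<sigma>)"]) auto
  qed
  then have "|Sig L (Suc k)| \<le>o |Sig L k \<times> {..<L k}|"
    using card_of_mono1 card_of_image ordLeq_transitive by blast
  moreover have "|Sig L k \<times> {..<L k}| <o |UNIV::'k set|"
    by (rule times_less[OF k_infinite[OF kappa] Suc k_less[OF kappa]])
  ultimately show ?case by (rule ordLeq_ordLess_trans)
qed

definition Inv where
  "Inv c U n LS \<longleftrightarrow> (let L = fst LS; S = snd LS in
     (\<forall>m\<le>n. L m \<in> U) \<and> (\<forall>m<n. L m < L (Suc m)) \<and>
     (\<forall>k\<le>n. \<forall>\<sigma>\<in>Sig L k. S \<sigma> \<in> seqs_below \<and> big c (S \<sigma>) \<and> agree c (S \<sigma>) (L k)) \<and>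
     (\<forall>k<n. \<forall>\<sigma>\<in>Sig L k. \<forall>a<L k. S \<sigma> \<subseteq>\<^sub>m S (\<sigma> @ [a])) \<and>
     (\<forall>k<n. \<forall>\<sigma>\<in>Sig L k. \<forall>a<L k. \<forall>b<L k. a \<noteq> b \<longrightarrow> disagree c (S (\<sigma> @ [a])) (S (\<sigma> @ [b])) (L (Suc k))))"

lemma Inv_step:
  fixes c :: "('k::wellorder \<Rightarrow> 'm) \<Rightarrow> ('k \<Rightarrow> 'b)"
  assumes kappa: "regular_uncountable_type TYPE('k)"
    and U: "unbounded U"
    and cont: "continuous_map (kappa_top :: ('k \<Rightarrow> 'm) topology) (subtopology kappa_top B) c"
    and inv: "Inv c U n (L, S)"
  shows "\<exists>L' S'. Inv c U (Suc n) (L', S') \<and> (\<forall>m\<le>n. L' m = L m) \<and> (\<forall>\<sigma>. length \<sigma> \<le> n \<longrightarrow> S' \<sigma> = S \<sigma>)"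
proof -
  have a: "\<forall>m\<le>n. L m \<in> U" and b: "\<forall>m<n. L m < L (Suc m)"
    and cc: "\<forall>k\<le>n. \<forall>\<sigma>\<in>Sig L k. S \<sigma> \<in> seqs_below \<and> big c (S \<sigma>) \<and> agree c (S \<sigma>) (L k)"
    and d: "\<forall>k<n. \<forall>\<sigma>\<in>Sig L k. \<forall>a<L k. S \<sigma> \<subseteq>\<^sub>m S (\<sigma> @ [a])"
    and e: "\<forall>k<n. \<forall>\<sigma>\<in>Sig L k. \<forall>a<L k. \<forall>b<L k. a \<noteq> b \<longrightarrow> disagree c (S (\<sigma> @ [a])) (S (\<sigma> @ [b])) (L (Suc k))"
    using inv unfolding Inv_def Let_def by auto
  have "\<forall>\<sigma>\<in>Sig L n. S \<sigma> \<in> seqs_below \<and> big c (S \<sigma>)" using cc by auto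
  from step[OF kappa U cont Sig_card[OF kappa] this, of "L n"]
  obtain l' S2 where l': "l' \<in> U" "L n < l'"
    and S2: "\<forall>\<sigma>\<in>Sig L n. \<forall>a<L n. S2 (\<sigma>, a) \<in> seqs_below \<and> big c (S2 (\<sigma>, a)) \<and> S \<sigma> \<subseteq>\<^sub>m S2 (\<sigma>, a) \<and> agree c (S2 (\<sigma>, a)) l'"
    and D2: "\<forall>\<sigma>\<in>Sig L n. \<forall>a<L n. \<forall>b<L n. a \<noteq> b \<longrightarrow> disagree c (S2 (\<sigma>, a)) (S2 (\<sigma>, b)) l'"
    by (elim exE conjE) (rule that; assumption)
  define L' where "L' = L(Suc n := l')"
  define S' where "S' = (\<lambda>\<tau>. if length \<tau> = Suc n then S2 (butlast \<tau>, last \<tau>) else S \<tau>)"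
  have SigL: "Sig L' k = Sig L k" if "k \<le> Suc n" for k
    by (rule Sig_cong) (use that in \<open>auto simp: L'_def\<close>)
  have L'k: "L' k = L k" if "k \<le> n" for k using that by (auto simp: L'_def)
  have S'k: "S' \<sigma> = S \<sigma>" if "length \<sigma> \<le> n" for \<sigma> using that by (auto simp: S'_def)
  have S'snoc: "S' (\<sigma> @ [a]) = S2 (\<sigma>, a)" if "length \<sigma> = n" for \<sigma> a using that by (auto simp: S'_def)
  have lenSig: "length \<sigma> = k" if "\<sigma> \<in> Sig L k" for \<sigma> k using that by (simp add: Sig_def)
  have P1: "\<forall>m\<le>Suc n. L' m \<in> U"
  proof (intro allI impI)
    fix m assume "m \<le> Suc n" then show "L' m \<in> U"
      using a l' by (cases "m = Suc n") (auto simp: L'_def)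
  qed
  have P2: "\<forall>m<Suc n. L' m < L' (Suc m)"
  proof (intro allI impI)
    fix m assume "m < Suc n" then show "L' m < L' (Suc m)"
      using b l' by (cases "m = n") (auto simp: L'_def)
  qed
  have P3: "\<forall>k\<le>Suc n. \<forall>\<sigma>\<in>Sig L' k. S' \<sigma> \<in> seqs_below \<and> big c (S' \<sigma>) \<and> agree c (S' \<sigma>) (L' k)"
  proof (intro allI impI ballI)
    fix k \<sigma> assume k: "k \<le> Suc n" and \<sigma>: "\<sigma> \<in> Sig L' k"
    then have \<sigma>': "\<sigma> \<in> Sig L k" using SigL by auto
    show "S' \<sigma> \<in> seqs_below \<and> big c (S' \<sigma>) \<and> agree c (S' \<sigma>) (L' k)"
    proof (cases "k = Suc n")
      case True
      with \<sigma>' have dec: "\<sigma> = butlast \<sigma> @ [last \<sigma>]" "butlast \<sigma> \<in> Sig L n" "last \<sigma> < L n"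
        using Sig_Suc_decomp by blast+
      have "S' \<sigma> = S2 (butlast \<sigma>, last \<sigma>)" using True \<sigma>' lenSig by (simp add: S'_def)
      moreover have "L' k = l'" using True by (simp add: L'_def)
      ultimately show ?thesis using S2 dec(2,3) by auto
    next
      case False
      then have "k \<le> n" using k by simp
      then show ?thesis using cc \<sigma>' S'k lenSig L'k by auto
    qed
  qed
  have P4: "\<forall>k<Suc n. \<forall>\<sigma>\<in>Sig L' k. \<forall>a<L' k. S' \<sigma> \<subseteq>\<^sub>m S' (\<sigma> @ [a])"
  proof (intro allI impI ballI)
    fix k \<sigma> a assume k: "k < Suc n" and \<sigma>: "\<sigma> \<in> Sig L' k" and a: "a < L' k"
    then have \<sigma>': "\<sigma> \<in> Sig L k" and a': "a < L k" using SigL L'k by auto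
    show "S' \<sigma> \<subseteq>\<^sub>m S' (\<sigma> @ [a])"
    proof (cases "k = n")
      case True
      then show ?thesis using S2 \<sigma>' a' S'k S'snoc lenSig by auto
    next
      case False
      then have "k < n" using k by simp
      then show ?thesis using d \<sigma>' a' S'k lenSig by auto
    qed
  qed
  have P5: "\<forall>k<Suc n. \<forall>\<sigma>\<in>Sig L' k. \<forall>a<L' k. \<forall>b<L' k. a \<noteq> b \<longrightarrow> disagree c (S' (\<sigma> @ [a])) (S' (\<sigma> @ [b])) (L' (Suc k))"
  proof (intro allI impI ballI)
    fix k \<sigma> a b assume k: "k < Suc n" and \<sigma>: "\<sigma> \<in> Sig L' k" and a: "a < L' k" and b: "b < L' k"
      and ab: "a \<noteq> b"
    then have \<sigma>': "\<sigma> \<in> Sig L k" and a': "a < L k" and b': "b < L k" using SigL L'k by auto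
    show "disagree c (S' (\<sigma> @ [a])) (S' (\<sigma> @ [b])) (L' (Suc k))"
    proof (cases "k = n")
      case True
      then show ?thesis using D2 \<sigma>' a' b' ab S'snoc lenSig by (auto simp: L'_def)
    next
      case False
      then have "k < n" using k by simp
      then have "L' (Suc k) = L (Suc k)" by (simp add: L'_def)
      then show ?thesis using e \<sigma>' a' b' ab S'k lenSig \<open>k < n\<close> by auto
    qed
  qed
  have "Inv c U (Suc n) (L', S')"
    unfolding Inv_def Let_def fst_conv snd_conv
    apply (intro conjI)
        apply (fact P1)
       apply (fact P2)
      apply (fact P3)
     apply (fact P4)
    apply (fact P5)
    done
  then show ?thesis using L'k S'k by blast
qed



lemma construction:
  fixes c :: "('k::wellorder \<Rightarrow> 'm) \<Rightarrow> ('k \<Rightarrow> 'b)"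
  assumes kappa: "regular_uncountable_type TYPE('k)"
    and U: "unbounded U"
    and cont: "continuous_map (kappa_top :: ('k \<Rightarrow> 'm) topology) (subtopology kappa_top B) c"
    and root: "s0 \<in> seqs_below" "big c s0"
  shows "\<exists>L S. (\<forall>m. L m \<in> U) \<and> (\<forall>m. L m < L (Suc m)) \<and>
     (\<forall>k. \<forall>\<sigma>\<in>Sig L k. S \<sigma> \<in> seqs_below \<and> big c (S \<sigma>) \<and> agree c (S \<sigma>) (L k)) \<and>
     (\<forall>k. \<forall>\<sigma>\<in>Sig L k. \<forall>a<L k. S \<sigma> \<subseteq>\<^sub>m S (\<sigma> @ [a])) \<and>
     (\<forall>k. \<forall>\<sigma>\<in>Sig L k. \<forall>a<L k. \<forall>b<L k. a \<noteq> b \<longrightarrow> disagree c (S (\<sigma> @ [a])) (S (\<sigma> @ [b])) (L (Suc k)))"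
proof -
  have inf: "infinite (UNIV::'k set)" by (rule k_infinite[OF kappa])
  have gb: "|seqs_below :: ('k \<rightharpoonup> 'm) set| <o |good c s0|" by (rule good_big[OF inf root(2)])
  have "good c s0 \<noteq> {}"
  proof
    assume "good c s0 = {}"
    then have "|good c s0| \<le>o |seqs_below :: ('k \<rightharpoonup> 'm) set|" using card_of_empty by simp
    then show False using gb not_ordLess_ordLeq by blast
  qed
  then obtain z where z: "z \<in> good c s0" by blast
  obtain l0 where l0: "l0 \<in> U" using U unfolding unbounded_def by blast
  from good_refine[OF cont root(1) z, of l0] obtain r where r: "r \<in> seqs_below" "big c r" "agree c r l0"
    by blast
  have P0: "\<exists>x. Inv c U 0 x"
    by (rule exI[of _ "(\<lambda>_. l0, \<lambda>_. r)"]) (simp add: Inv_def l0 r)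
  have PS: "\<exists>y. Inv c U (Suc n) y \<and> ((\<forall>m\<le>n. fst y m = fst x m) \<and> (\<forall>\<sigma>. length \<sigma> \<le> n \<longrightarrow> snd y \<sigma> = snd x \<sigma>))"
    if "Inv c U n x" for n x
  proof -
    obtain L S where x: "x = (L, S)" by (cases x)
    from Inv_step[OF kappa U cont that[unfolded x]] obtain L' S' where
      "Inv c U (Suc n) (L', S')" "\<forall>m\<le>n. L' m = L m" "\<forall>\<sigma>. length \<sigma> \<le> n \<longrightarrow> S' \<sigma> = S \<sigma>"
      by blast
    then show ?thesis using x by (intro exI[of _ "(L', S')"]) simp
  qed
  from dependent_nat_choice[of "Inv c U" "\<lambda>n x y. (\<forall>m\<le>n. fst y m = fst x m) \<and> (\<forall>\<sigma>. length \<sigma> \<le> n \<longrightarrow> snd y \<sigma> = snd x \<sigma>)", OF P0 PS]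
  obtain f where f: "\<And>n. Inv c U n (f n)"
    and fL: "\<And>n m. m \<le> n \<Longrightarrow> fst (f (Suc n)) m = fst (f n) m"
    and fS: "\<And>n \<sigma>. length \<sigma> \<le> n \<Longrightarrow> snd (f (Suc n)) \<sigma> = snd (f n) \<sigma>"
    by blast
  define Lf where "Lf m = fst (f m) m" for m
  define Sf where "Sf \<sigma> = snd (f (length \<sigma>)) \<sigma>" for \<sigma>
  have cL: "fst (f (m + j)) m = Lf m" for m j
    by (induction j) (auto simp: Lf_def fL)
  have LfE: "fst (f n) m = Lf m" if "m \<le> n" for m n
    using cL[of m "n - m"] that by simp
  have cS: "snd (f (length \<sigma> + j)) \<sigma> = Sf \<sigma>" for \<sigma> j
    by (induction j) (auto simp: Sf_def fS)
  have SfE: "snd (f n) \<sigma> = Sf \<sigma>" if "length \<sigma> \<le> n" for \<sigma> n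
    using cS[of \<sigma> "n - length \<sigma>"] that by simp
  have SigE: "Sig (fst (f n)) k = Sig Lf k" if "k \<le> n" for k n
    by (rule Sig_cong) (use that LfE in auto)
  have lenSig: "length \<sigma> = k" if "\<sigma> \<in> Sig L k" for \<sigma> k L using that by (simp add: Sig_def)
  have I: "(\<forall>m\<le>n. fst (f n) m \<in> U) \<and> (\<forall>m<n. fst (f n) m < fst (f n) (Suc m)) \<and>
     (\<forall>k\<le>n. \<forall>\<sigma>\<in>Sig (fst (f n)) k. snd (f n) \<sigma> \<in> seqs_below \<and> big c (snd (f n) \<sigma>) \<and> agree c (snd (f n) \<sigma>) (fst (f n) k)) \<and>
     (\<forall>k<n. \<forall>\<sigma>\<in>Sig (fst (f n)) k. \<forall>a<fst (f n) k. snd (f n) \<sigma> \<subseteq>\<^sub>m snd (f n) (\<sigma> @ [a])) \<and>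
     (\<forall>k<n. \<forall>\<sigma>\<in>Sig (fst (f n)) k. \<forall>a<fst (f n) k. \<forall>b<fst (f n) k. a \<noteq> b \<longrightarrow> disagree c (snd (f n) (\<sigma> @ [a])) (snd (f n) (\<sigma> @ [b])) (fst (f n) (Suc k)))" for n
    using f[of n] unfolding Inv_def Let_def by (simp only:)
  have I1: "\<forall>m\<le>n. fst (f n) m \<in> U" for n using I[of n] by (rule conjunct1)
  have I2: "\<forall>m<n. fst (f n) m < fst (f n) (Suc m)" for n using I[of n] by (elim conjE)
  have I3: "\<forall>k\<le>n. \<forall>\<sigma>\<in>Sig (fst (f n)) k. snd (f n) \<sigma> \<in> seqs_below \<and> big c (snd (f n) \<sigma>) \<and> agree c (snd (f n) \<sigma>) (fst (f n) k)" for n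
    using I[of n] by (elim conjE)
  have I4: "\<forall>k<n. \<forall>\<sigma>\<in>Sig (fst (f n)) k. \<forall>a<fst (f n) k. snd (f n) \<sigma> \<subseteq>\<^sub>m snd (f n) (\<sigma> @ [a])" for n
    using I[of n] by (elim conjE)
  have I5: "\<forall>k<n. \<forall>\<sigma>\<in>Sig (fst (f n)) k. \<forall>a<fst (f n) k. \<forall>b<fst (f n) k. a \<noteq> b \<longrightarrow> disagree c (snd (f n) (\<sigma> @ [a])) (snd (f n) (\<sigma> @ [b])) (fst (f n) (Suc k))" for n
    using I[of n] by (elim conjE)
  have A: "\<forall>m. Lf m \<in> U"
  proof
    fix m have "fst (f m) m \<in> U" using I1[of m] by simp
    then show "Lf m \<in> U" by (simp add: Lf_def)
  qed
  have B: "\<forall>m. Lf m < Lf (Suc m)"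
  proof
    fix m have "fst (f (Suc m)) m < fst (f (Suc m)) (Suc m)" using I2[of "Suc m"] by simp
    then show "Lf m < Lf (Suc m)" using LfE[of m "Suc m"] LfE[of "Suc m" "Suc m"] by simp
  qed
  have C: "\<forall>k. \<forall>\<sigma>\<in>Sig Lf k. Sf \<sigma> \<in> seqs_below \<and> big c (Sf \<sigma>) \<and> agree c (Sf \<sigma>) (Lf k)"
  proof (intro allI ballI)
    fix k \<sigma> assume \<sigma>: "\<sigma> \<in> Sig Lf k"
    then have \<sigma>': "\<sigma> \<in> Sig (fst (f k)) k" using SigE[of k k] by simp
    have "snd (f k) \<sigma> \<in> seqs_below \<and> big c (snd (f k) \<sigma>) \<and> agree c (snd (f k) \<sigma>) (fst (f k) k)"
      using I3[of k, rule_format, OF le_refl \<sigma>'] .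
    then show "Sf \<sigma> \<in> seqs_below \<and> big c (Sf \<sigma>) \<and> agree c (Sf \<sigma>) (Lf k)"
      using SfE[of \<sigma> k] lenSig[OF \<sigma>] LfE[of k k] by simp
  qed
  have D: "\<forall>k. \<forall>\<sigma>\<in>Sig Lf k. \<forall>a<Lf k. Sf \<sigma> \<subseteq>\<^sub>m Sf (\<sigma> @ [a])"
  proof (intro allI ballI impI)
    fix k \<sigma> a assume \<sigma>: "\<sigma> \<in> Sig Lf k" and a: "a < Lf k"
    then have \<sigma>': "\<sigma> \<in> Sig (fst (f (Suc k))) k" using SigE[of k "Suc k"] by simp
    have a': "a < fst (f (Suc k)) k" using a LfE[of k "Suc k"] by simp
    have "snd (f (Suc k)) \<sigma> \<subseteq>\<^sub>m snd (f (Suc k)) (\<sigma> @ [a])"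
      using I4[of "Suc k", rule_format, OF lessI \<sigma>' a'] .
    then show "Sf \<sigma> \<subseteq>\<^sub>m Sf (\<sigma> @ [a])"
      using SfE[of \<sigma> "Suc k"] SfE[of "\<sigma> @ [a]" "Suc k"] lenSig[OF \<sigma>] by simp
  qed
  have E: "\<forall>k. \<forall>\<sigma>\<in>Sig Lf k. \<forall>a<Lf k. \<forall>b<Lf k. a \<noteq> b \<longrightarrow> disagree c (Sf (\<sigma> @ [a])) (Sf (\<sigma> @ [b])) (Lf (Suc k))"
  proof (intro allI ballI impI)
    fix k \<sigma> a b assume \<sigma>: "\<sigma> \<in> Sig Lf k" and a: "a < Lf k" and b: "b < Lf k" and ab: "a \<noteq> b"
    then have \<sigma>': "\<sigma> \<in> Sig (fst (f (Suc k))) k" using SigE[of k "Suc k"] by simp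
    have a': "a < fst (f (Suc k)) k" "b < fst (f (Suc k)) k" using a b LfE[of k "Suc k"] by simp_all
    have "disagree c (snd (f (Suc k)) (\<sigma> @ [a])) (snd (f (Suc k)) (\<sigma> @ [b])) (fst (f (Suc k)) (Suc k))"
      using I5[of "Suc k", rule_format, OF lessI \<sigma>' a' ab] .
    then show "disagree c (Sf (\<sigma> @ [a])) (Sf (\<sigma> @ [b])) (Lf (Suc k))"
      using SfE[of "\<sigma> @ [a]" "Suc k"] SfE[of "\<sigma> @ [b]" "Suc k"] lenSig[OF \<sigma>] LfE[of "Suc k" "Suc k"] by simp
  qed
  show ?thesis by (rule exI[of _ Lf], rule exI[of _ Sf]) (intro conjI A B C D E)
qed



lemma restr_le: "restr w a = restr w' a \<Longrightarrow> b \<le> a \<Longrightarrow> restr w b = restr w' b"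
  unfolding restr_def by (auto simp: fun_eq_iff) (metis less_le_trans option.inject)

lemma restr_p_restr: "b \<le> a \<Longrightarrow> restr_p (restr w a) b = restr w b"
  unfolding restr_def restr_p_def by (auto simp: fun_eq_iff)

lemma dom_restr: "dom (restr w a) = {..<a}"
  unfolding restr_def by (auto simp: dom_def)

theorem theorem7p1:
  fixes U :: "'k::wellorder set"
    and T :: "('k \<rightharpoonup> 'k) set"
    and c :: "('k \<Rightarrow> 'm) \<Rightarrow> ('k \<Rightarrow> 'k)"
  assumes kappa: "regular_uncountable_type TYPE('k)"
    and U: "unbounded U"
    and T: "is_subtree T"
    and mu: "(card_of (seqs_below :: ('k \<rightharpoonup> 'm) set), card_of (body T)) \<in> ordLess"
    and cont: "continuous_map (kappa_top :: ('k \<Rightarrow> 'm) topology) (subtopology kappa_top (body T)) c"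
    and surj: "c ` UNIV = body T"
  shows "\<exists>(lam :: nat \<Rightarrow> 'k) (sup_lam :: 'k) (i :: (nat \<Rightarrow> 'k) \<Rightarrow> ('k \<rightharpoonup> 'k)).
           strict_mono lam \<and> range lam \<subseteq> U \<and>
           (\<forall>n. lam n \<le> sup_lam) \<and> (\<forall>\<beta>. (\<forall>n. lam n \<le> \<beta>) \<longrightarrow> sup_lam \<le> \<beta>) \<and>
           inj_on i (Pi UNIV (\<lambda>n. {..<lam n})) \<and>
           i ` (Pi UNIV (\<lambda>n. {..<lam n})) \<subseteq> level T sup_lam \<and>
           (\<forall>x\<in>Pi UNIV (\<lambda>n. {..<lam n}). \<forall>y\<in>Pi UNIV (\<lambda>n. {..<lam n}). \<forall>n::nat.
              (\<forall>m<n. x m = y m) \<longleftrightarrow> restr_p (i x) (lam n) = restr_p (i y) (lam n))"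
proof -
  have root: "(Map.empty :: 'k \<rightharpoonup> 'm) \<in> seqs_below" "big c (Map.empty :: 'k \<rightharpoonup> 'm)"
    using empty_seqs mu surj unfolding big_def nbhd_empty by auto
  from construction[OF kappa U cont root] obtain L S where
    A: "\<forall>m. L m \<in> U" and B: "\<forall>m. L m < L (Suc m)"
    and C: "\<forall>k. \<forall>\<sigma>\<in>Sig L k. S \<sigma> \<in> seqs_below \<and> big c (S \<sigma>) \<and> agree c (S \<sigma>) (L k)"
    and D: "\<forall>k. \<forall>\<sigma>\<in>Sig L k. \<forall>a<L k. S \<sigma> \<subseteq>\<^sub>m S (\<sigma> @ [a])"
    and E: "\<forall>k. \<forall>\<sigma>\<in>Sig L k. \<forall>a<L k. \<forall>b<L k. a \<noteq> b \<longrightarrow> disagree c (S (\<sigma> @ [a])) (S (\<sigma> @ [b])) (L (Suc k))"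
    by (elim exE conjE) (rule that; assumption)
  have sm: "strict_mono L" using B by (simp add: strict_mono_Suc_iff)
  have rU: "range L \<subseteq> U" using A by auto
  from k_countable_bounded[OF kappa, of "range L"] obtain \<alpha> where \<alpha>: "\<forall>n. L n < \<alpha>" by auto
  define sup where "sup = (LEAST \<beta>. \<forall>n. L n \<le> \<beta>)"
  have sup1: "\<forall>n. L n \<le> sup" unfolding sup_def
    by (rule LeastI[of _ \<alpha>]) (use \<alpha> in \<open>auto intro: less_imp_le\<close>)
  have sup2: "\<forall>\<beta>. (\<forall>n. L n \<le> \<beta>) \<longrightarrow> sup \<le> \<beta>" unfolding sup_def by (auto intro: Least_le)
  define P where "P = Pi UNIV (\<lambda>n. {..<L n})"
  define sg where "sg x n = map x [0..<n]" for x :: "nat \<Rightarrow> 'k" and n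
  have sgSig: "sg x n \<in> Sig L n" if "x \<in> P" for x n
    using that unfolding sg_def Sig_def P_def by auto
  have sgSuc: "sg x (Suc n) = sg x n @ [x n]" for x n by (simp add: sg_def)
  have chain1: "S (sg x n) \<subseteq>\<^sub>m S (sg x (Suc n))" if "x \<in> P" for x n
  proof -
    have "x n < L n" using that unfolding P_def by auto
    then show ?thesis using D sgSig[OF that, of n] unfolding sgSuc by blast
  qed
  have chain: "S (sg x m) \<subseteq>\<^sub>m S (sg x n)" if "x \<in> P" "m \<le> n" for x m n
    using that(2)
  proof (induction n rule: dec_induct)
    case base then show ?case by (rule map_le_refl)
  next
    case (step n) then show ?case using chain1[OF that(1), of n] map_le_trans by blast
  qed
  define Y where "Y x \<beta> = (case S (sg x (LEAST n. \<beta> \<in> dom (S (sg x n)))) \<beta> of Some v \<Rightarrow> v | None \<Rightarrow> undefined)"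
    for x \<beta>
  have Ynb: "Y x \<in> basic_nbhd (S (sg x n))" if "x \<in> P" for x n
    unfolding basic_nbhd_def
  proof (intro CollectI ballI)
    fix \<beta> assume b: "\<beta> \<in> dom (S (sg x n))"
    define n0 where "n0 = (LEAST n. \<beta> \<in> dom (S (sg x n)))"
    have n0: "\<beta> \<in> dom (S (sg x n0))" "n0 \<le> n" unfolding n0_def
      by (rule LeastI[of "\<lambda>n. \<beta> \<in> dom (S (sg x n))" n, OF b],
          rule Least_le[of "\<lambda>n. \<beta> \<in> dom (S (sg x n))" n, OF b])
    have "S (sg x n0) \<beta> = S (sg x n) \<beta>" using chain[OF that n0(2)] n0(1) unfolding map_le_def by blast
    moreover obtain v where "S (sg x n0) \<beta> = Some v" using n0(1) unfolding dom_def by blast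
    ultimately show "S (sg x n) \<beta> = Some (Y x \<beta>)" unfolding Y_def n0_def[symmetric] by (metis option.simps(5))
  qed
  have key: "(\<forall>m<n. x m = y m) \<longleftrightarrow> restr (c (Y x)) (L n) = restr (c (Y y)) (L n)"
    if x: "x \<in> P" and y: "y \<in> P" for x y n
  proof
    assume "\<forall>m<n. x m = y m"
    then have e: "sg x n = sg y n" unfolding sg_def by simp
    have "agree c (S (sg x n)) (L n)" using C sgSig[OF x] by blast
    then show "restr (c (Y x)) (L n) = restr (c (Y y)) (L n)"
      using Ynb[OF x, of n] Ynb[OF y, of n] e unfolding agree_def by metis
  next
    assume eq: "restr (c (Y x)) (L n) = restr (c (Y y)) (L n)"
    show "\<forall>m<n. x m = y m"
    proof (rule ccontr)
      assume "\<not> (\<forall>m<n. x m = y m)"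
      then have ex: "\<exists>j. j < n \<and> x j \<noteq> y j" by auto
      define m where "m = (LEAST j. j < n \<and> x j \<noteq> y j)"
      have m: "m < n" "x m \<noteq> y m" using LeastI_ex[OF ex] unfolding m_def by auto
      have before: "\<forall>j<m. x j = y j" using not_less_Least[of _ "\<lambda>j. j < n \<and> x j \<noteq> y j"] m(1)
        unfolding m_def by (meson less_trans)
      then have e: "sg x m = sg y m" unfolding sg_def by simp
      have xm: "x m < L m" "y m < L m" using x y unfolding P_def by auto
      have "disagree c (S (sg x m @ [x m])) (S (sg x m @ [y m])) (L (Suc m))"
        using E sgSig[OF x, of m] xm m(2) by blast
      moreover have "Y x \<in> basic_nbhd (S (sg x m @ [x m]))" using Ynb[OF x, of "Suc m"] sgSuc by simp
      moreover have "Y y \<in> basic_nbhd (S (sg x m @ [y m]))" using Ynb[OF y, of "Suc m"] sgSuc e by simp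
      ultimately have ne: "restr (c (Y x)) (L (Suc m)) \<noteq> restr (c (Y y)) (L (Suc m))"
        unfolding disagree_def by blast
      have "L (Suc m) \<le> L n" using m(1) sm by (simp add: strict_mono_less_eq)
      then show False using restr_le[OF eq] ne by blast
    qed
  qed
  define i where "i x = restr (c (Y x)) sup" for x
  have inj: "inj_on i P"
  proof (rule inj_onI)
    fix x y assume x: "x \<in> P" and y: "y \<in> P" and e: "i x = i y"
    have "\<forall>m<n. x m = y m" for n
      using key[OF x y, of n] restr_le[OF e[unfolded i_def] sup1[rule_format, of n]] by blast
    then show "x = y" by (auto simp: fun_eq_iff)
  qed
  have lev: "i ` P \<subseteq> level T sup"
  proof
    fix t assume "t \<in> i ` P"
    then obtain x where t: "t = i x" by auto
    have "c (Y x) \<in> body T" using surj by auto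
    then have "restr (c (Y x)) sup \<in> T" unfolding body_def by auto
    then show "t \<in> level T sup" unfolding level_def t i_def by (simp add: dom_restr)
  qed
  have last: "\<forall>x\<in>P. \<forall>y\<in>P. \<forall>n::nat. (\<forall>m<n. x m = y m) \<longleftrightarrow> restr_p (i x) (L n) = restr_p (i y) (L n)"
    unfolding i_def using key sup1 by (simp add: restr_p_restr)
  show ?thesis
    apply (rule exI[of _ L], rule exI[of _ sup], rule exI[of _ i])
    using sm rU sup1 sup2 inj lev last unfolding P_def by blast
qed


end
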